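(* Let $k$ be an algebraically closed field of characteristic $0$, $G$ a finite group and $V$ any finite-dimensional $G$-module. Then $\mathrm{pol\,ind}(V)=\infty$.
   Context: For $n\in\mathbb N$, $G$ acts diagonally on $V^{\oplus n}$. Polarizations of $f\in k[V]$: $f(\alpha_1v_1+\dots+\alpha_nv_n)=\sum_{(i_1,\dots,i_n)\in\mathbb Z_+^n}\alpha_1^{i_1}\cdots\alpha_n^{i_n}f_{i_1,\dots,i_n}(v_1,\dots,v_n)$; $\mathrm{pol}_nk[V]^G\subseteq k[V^{\oplus n}]^G$ is generated by polarizations of all $f\in k[V]^G$. $\mathcal N_{V^{\oplus n},G}=\{w:F(w)=F(0)\ \forall F\in k[V^{\oplus n}]^G\}$, $\mathcal P_{V^{\oplus n},G}=\{w:h(w)=h(0)\ \forall h\in\mathrm{pol}_nk[V]^G\}$. The polarization index $\mathrm{pol\,ind}(V)$ is the supremum of all $n\in\mathbb N$ with $\mathcal N_{V^{\oplus n},G}=\mathcal P_{V^{\oplus n},G}$. *)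

theory Defs
  imports "HOL-Algebra.Group" "HOL-Computational_Algebra.Polynomial" "HOL-Library.Extended_Nat"
begin

definition alg_closed :: "'k::field itself \<Rightarrow> bool" where
  "alg_closed _ \<longleftrightarrow> (\<forall>p :: 'k poly. degree p > 0 \<longrightarrow> (\<exists>x. poly p x = 0))"

text \<open>The k-algebra of functions generated by a set C of functions (constants, C, sums, products).
  With C the coordinate functions this is the algebra of polynomial functions.\<close>
inductive_set gen_alg :: "('a \<Rightarrow> 'k::comm_ring_1) set \<Rightarrow> ('a \<Rightarrow> 'k) set" for C where
  const: "(\<lambda>_. c) \<in> gen_alg C"
| gen: "f \<in> C \<Longrightarrow> f \<in> gen_alg C"
| add: "f \<in> gen_alg C \<Longrightarrow> g \<in> gen_alg C \<Longrightarrow> (\<lambda>x. f x + g x) \<in> gen_alg C"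
| mult: "f \<in> gen_alg C \<Longrightarrow> g \<in> gen_alg C \<Longrightarrow> (\<lambda>x. f x * g x) \<in> gen_alg C"

text \<open>V is modelled as the coordinate space 'd \<Rightarrow> 'k ('d a finite index type).
  k[V]: polynomial functions on V.\<close>
definition polys_V :: "(('d \<Rightarrow> 'k::comm_ring_1) \<Rightarrow> 'k) set" where
  "polys_V = gen_alg {(\<lambda>v. v j) | j. True}"

text \<open>V^{\<oplus>n}: n-tuples (w 0, ..., w (n-1)) of vectors, encoded as nat-indexed families vanishing from n on.\<close>
definition Vsum :: "nat \<Rightarrow> (nat \<Rightarrow> 'd \<Rightarrow> 'k::zero) set" where
  "Vsum n = {w. \<forall>i\<ge>n. w i = (\<lambda>_. 0)}"

definition polys_Vn :: "nat \<Rightarrow> ((nat \<Rightarrow> 'd \<Rightarrow> 'k::comm_ring_1) \<Rightarrow> 'k) set" where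
  "polys_Vn n = gen_alg {(\<lambda>w. w i j) | i j. i < n}"

definition G_module :: "('g, 'm) monoid_scheme \<Rightarrow> ('g \<Rightarrow> ('d \<Rightarrow> 'k::field) \<Rightarrow> ('d \<Rightarrow> 'k)) \<Rightarrow> bool" where
  "G_module G \<rho> \<longleftrightarrow>
     (\<forall>g\<in>carrier G. \<forall>u v. \<rho> g (\<lambda>j. u j + v j) = (\<lambda>j. \<rho> g u j + \<rho> g v j)) \<and>
     (\<forall>g\<in>carrier G. \<forall>c v. \<rho> g (\<lambda>j. c * v j) = (\<lambda>j. c * \<rho> g v j)) \<and>
     (\<forall>v. \<rho> \<one>\<^bsub>G\<^esub> v = v) \<and>
     (\<forall>g\<in>carrier G. \<forall>h\<in>carrier G. \<forall>v. \<rho> (g \<otimes>\<^bsub>G\<^esub> h) v = \<rho> g (\<rho> h v))"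

definition inv_V :: "('g, 'm) monoid_scheme \<Rightarrow> ('g \<Rightarrow> ('d \<Rightarrow> 'k::field) \<Rightarrow> ('d \<Rightarrow> 'k)) \<Rightarrow> (('d \<Rightarrow> 'k) \<Rightarrow> 'k) set" where
  "inv_V G \<rho> = {f \<in> polys_V. \<forall>g\<in>carrier G. \<forall>v. f (\<rho> g v) = f v}"

definition inv_Vn :: "('g, 'm) monoid_scheme \<Rightarrow> ('g \<Rightarrow> ('d \<Rightarrow> 'k::field) \<Rightarrow> ('d \<Rightarrow> 'k)) \<Rightarrow> nat
    \<Rightarrow> ((nat \<Rightarrow> 'd \<Rightarrow> 'k) \<Rightarrow> 'k) set" where
  "inv_Vn G \<rho> n = {F \<in> polys_Vn n. \<forall>g\<in>carrier G. \<forall>w\<in>Vsum n. F (\<lambda>i. \<rho> g (w i)) = F w}"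

text \<open>h is a family of polarizations of f: the coefficient functions h e (e a multi-index supported
  in {..<n}) in the expansion f(\<alpha>_0 v_0 + ... + \<alpha>_{n-1} v_{n-1}) = \<Sum>_e \<alpha>^e h_e(v).
  Only finitely many h e are nonzero; over an infinite field these are uniquely determined.\<close>
definition pol_family :: "nat \<Rightarrow> (('d \<Rightarrow> 'k::field) \<Rightarrow> 'k) \<Rightarrow> ((nat \<Rightarrow> nat) \<Rightarrow> (nat \<Rightarrow> 'd \<Rightarrow> 'k) \<Rightarrow> 'k) \<Rightarrow> bool" where
  "pol_family n f h \<longleftrightarrow>
     (\<forall>e. h e \<in> polys_Vn n) \<and>
     finite {e. h e \<noteq> (\<lambda>_. 0)} \<and>
     (\<forall>e. (\<exists>i\<ge>n. e i \<noteq> 0) \<longrightarrow> h e = (\<lambda>_. 0)) \<and>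
     (\<forall>\<alpha> w. w \<in> Vsum n \<longrightarrow>
        f (\<lambda>j. \<Sum>i<n. \<alpha> i * w i j) =
        (\<Sum>e\<in>{e. h e \<noteq> (\<lambda>_. 0)}. (\<Prod>i<n. \<alpha> i ^ e i) * h e w))"

definition pol_inv :: "('g, 'm) monoid_scheme \<Rightarrow> ('g \<Rightarrow> ('d \<Rightarrow> 'k::field) \<Rightarrow> ('d \<Rightarrow> 'k)) \<Rightarrow> nat
    \<Rightarrow> ((nat \<Rightarrow> 'd \<Rightarrow> 'k) \<Rightarrow> 'k) set" where
  "pol_inv G \<rho> n = gen_alg {h e | f h e. f \<in> inv_V G \<rho> \<and> pol_family n f h}"

definition nullcone :: "('g, 'm) monoid_scheme \<Rightarrow> ('g \<Rightarrow> ('d \<Rightarrow> 'k::field) \<Rightarrow> ('d \<Rightarrow> 'k)) \<Rightarrow> nat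
    \<Rightarrow> (nat \<Rightarrow> 'd \<Rightarrow> 'k) set" where
  "nullcone G \<rho> n = {w \<in> Vsum n. \<forall>F\<in>inv_Vn G \<rho> n. F w = F (\<lambda>_ _. 0)}"

definition pol_nullcone :: "('g, 'm) monoid_scheme \<Rightarrow> ('g \<Rightarrow> ('d \<Rightarrow> 'k::field) \<Rightarrow> ('d \<Rightarrow> 'k)) \<Rightarrow> nat
    \<Rightarrow> (nat \<Rightarrow> 'd \<Rightarrow> 'k) set" where
  "pol_nullcone G \<rho> n = {w \<in> Vsum n. \<forall>h\<in>pol_inv G \<rho> n. h w = h (\<lambda>_ _. 0)}"

definition pol_ind :: "('g, 'm) monoid_scheme \<Rightarrow> ('g \<Rightarrow> ('d \<Rightarrow> 'k::field) \<Rightarrow> ('d \<Rightarrow> 'k)) \<Rightarrow> enat" where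
  "pol_ind G \<rho> = Sup {enat n | n. nullcone G \<rho> n = pol_nullcone G \<rho> n}"

end

theory Submission
  imports Defs
begin

lemma gen_alg_sum:
  assumes "finite S" "\<And>x. x \<in> S \<Longrightarrow> f x \<in> gen_alg C"
  shows "(\<lambda>w. \<Sum>x\<in>S. f x w) \<in> gen_alg C"
  using assms
proof (induction S rule: finite_induct)
  case empty
  then show ?case using gen_alg.const[of 0 C] by simp
next
  case (insert x F)
  then show ?case using gen_alg.add[of "f x" C "\<lambda>w. \<Sum>x\<in>F. f x w"] by simp
qed

lemma gen_alg_prod:
  assumes "finite S" "\<And>x. x \<in> S \<Longrightarrow> f x \<in> gen_alg C"
  shows "(\<lambda>w. \<Prod>x\<in>S. f x w) \<in> gen_alg C"
  using assms
proof (induction S rule: finite_induct)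
  case empty
  then show ?case using gen_alg.const[of 1 C] by simp
next
  case (insert x F)
  then show ?case using gen_alg.mult[of "f x" C "\<lambda>w. \<Prod>x\<in>F. f x w"] by simp
qed

lemma gen_alg_comp:
  assumes "f \<in> gen_alg C" "\<And>c. c \<in> C \<Longrightarrow> (\<lambda>x. c (\<phi> x)) \<in> gen_alg D"
  shows "(\<lambda>x. f (\<phi> x)) \<in> gen_alg D"
  using assms
proof (induction f rule: gen_alg.induct)
  case (const c)
  then show ?case using gen_alg.const by blast
next
  case (gen f)
  then show ?case by blast
next
  case (add f g)
  then show ?case using gen_alg.add by fastforce
next
  case (mult f g)
  then show ?case using gen_alg.mult by fastforce
qed

lemma rho_add:
  fixes \<rho> :: "'g \<Rightarrow> ('d \<Rightarrow> 'k::field) \<Rightarrow> ('d \<Rightarrow> 'k)"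
  assumes "G_module G \<rho>" "g \<in> carrier G"
  shows "\<rho> g (\<lambda>j. u j + v j) = (\<lambda>j. \<rho> g u j + \<rho> g v j)"
  using assms unfolding G_module_def by blast

lemma rho_smult:
  fixes \<rho> :: "'g \<Rightarrow> ('d \<Rightarrow> 'k::field) \<Rightarrow> ('d \<Rightarrow> 'k)"
  assumes "G_module G \<rho>" "g \<in> carrier G"
  shows "\<rho> g (\<lambda>j. c * v j) = (\<lambda>j. c * \<rho> g v j)"
  using assms unfolding G_module_def by blast

lemma rho_zero:
  fixes \<rho> :: "'g \<Rightarrow> ('d \<Rightarrow> 'k::field) \<Rightarrow> ('d \<Rightarrow> 'k)"
  assumes "G_module G \<rho>" "g \<in> carrier G"
  shows "\<rho> g (\<lambda>_. 0) = (\<lambda>_. 0)"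
  using rho_smult[OF assms, of 0 "\<lambda>_. 0"] by simp

lemma rho_lin_aux:
  fixes \<rho> :: "'g \<Rightarrow> ('d \<Rightarrow> 'k::field) \<Rightarrow> ('d \<Rightarrow> 'k)"
  assumes "G_module G \<rho>" "g \<in> carrier G" "finite S"
  shows "\<rho> g (\<lambda>j. \<Sum>d\<in>S. u d * (if j = d then 1 else 0)) =
         (\<lambda>j. \<Sum>d\<in>S. u d * \<rho> g (\<lambda>j'. if j' = d then 1 else 0) j)"
  using assms(3)
proof (induction S rule: finite_induct)
  case empty
  then show ?case using rho_zero[OF assms(1,2)] by simp
next
  case (insert x F)
  have add: "\<rho> g (\<lambda>j. u x * (if j = x then 1 else 0) + (\<Sum>d\<in>F. u d * (if j = d then 1 else 0)))
     = (\<lambda>j. \<rho> g (\<lambda>j. u x * (if j = x then 1 else 0)) j + \<rho> g (\<lambda>j. \<Sum>d\<in>F. u d * (if j = d then 1 else 0)) j)"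
    using rho_add[OF assms(1,2), of "\<lambda>j. u x * (if j = x then 1 else 0)" "\<lambda>j. \<Sum>d\<in>F. u d * (if j = d then 1 else 0)"] by simp
  have hom: "\<rho> g (\<lambda>j. u x * (if j = x then 1 else 0)) = (\<lambda>j. u x * \<rho> g (\<lambda>j'. if j' = x then 1 else 0) j)"
    using rho_smult[OF assms(1,2), of "u x" "\<lambda>j'. if j' = x then 1 else 0"] by simp
  show ?case using insert add hom by simp
qed

lemma rho_lin:
  fixes \<rho> :: "'g \<Rightarrow> ('d::finite \<Rightarrow> 'k::field) \<Rightarrow> ('d \<Rightarrow> 'k)"
  assumes "G_module G \<rho>" "g \<in> carrier G"
  shows "\<rho> g u j = (\<Sum>d\<in>UNIV. u d * \<rho> g (\<lambda>j'. if j' = d then 1 else 0) j)"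
proof -
  have "u = (\<lambda>j. \<Sum>d\<in>(UNIV::'d set). u d * (if j = d then 1 else 0))"
    by (simp add: if_distrib cong: if_cong)
  then have "\<rho> g u = \<rho> g (\<lambda>j. \<Sum>d\<in>(UNIV::'d set). u d * (if j = d then 1 else 0))" by metis
  then show ?thesis using rho_lin_aux[OF assms, of UNIV u] by simp
qed

lemma rcos_bij:
  assumes "group G" "h \<in> carrier G"
  shows "bij_betw (\<lambda>g. g \<otimes>\<^bsub>G\<^esub> h) (carrier G) (carrier G)"
proof (rule bij_betwI[where g = "\<lambda>g. g \<otimes>\<^bsub>G\<^esub> inv\<^bsub>G\<^esub> h"])
  show "(\<lambda>g. g \<otimes>\<^bsub>G\<^esub> h) \<in> carrier G \<rightarrow> carrier G" using assms by (auto simp: group.is_monoid monoid.m_closed)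
  show "(\<lambda>g. g \<otimes>\<^bsub>G\<^esub> inv\<^bsub>G\<^esub> h) \<in> carrier G \<rightarrow> carrier G" using assms by (auto simp: group.is_monoid monoid.m_closed group.inv_closed)
  show "\<And>x. x \<in> carrier G \<Longrightarrow> x \<otimes>\<^bsub>G\<^esub> h \<otimes>\<^bsub>G\<^esub> inv\<^bsub>G\<^esub> h = x" using assms
    by (simp add: group.is_monoid monoid.m_assoc group.inv_closed group.r_inv monoid.r_one)
  show "\<And>x. x \<in> carrier G \<Longrightarrow> x \<otimes>\<^bsub>G\<^esub> inv\<^bsub>G\<^esub> h \<otimes>\<^bsub>G\<^esub> h = x" using assms
    by (simp add: group.is_monoid monoid.m_assoc group.inv_closed group.l_inv monoid.r_one)
qed

lemma core:
  fixes \<rho> :: "'g \<Rightarrow> ('d::finite \<Rightarrow> 'k::field) \<Rightarrow> ('d \<Rightarrow> 'k)"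
  assumes "group G" "finite (carrier G)" "G_module G \<rho>"
    and "\<forall>f\<in>inv_V G \<rho>. f v = f (\<lambda>_. 0)"
  shows "v = (\<lambda>_. 0)"
proof (rule ccontr)
  assume "v \<noteq> (\<lambda>_. 0)"
  then obtain j where vj: "v j \<noteq> 0" by auto
  define t where "t = - v j"
  define f where "f = (\<lambda>u. \<Prod>g\<in>carrier G. (t + \<rho> g u j))"
  have "f \<in> polys_V"
    unfolding polys_V_def f_def
  proof (rule gen_alg_prod[OF assms(2)])
    fix g assume g: "g \<in> carrier G"
    have L: "(\<lambda>u. \<Sum>d\<in>UNIV. (\<lambda>u. u d * \<rho> g (\<lambda>j'. if j' = d then 1 else 0) j) u) \<in> gen_alg {(\<lambda>v. v j) | j. True}"
      apply (rule gen_alg_sum, simp)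
      apply (rule gen_alg.mult[of "\<lambda>u. u _" _ "\<lambda>_. _", simplified])
       apply (rule gen_alg.gen, blast)
      apply (rule gen_alg.const)
      done
    have "(\<lambda>u. t + \<rho> g u j) = (\<lambda>u. t + (\<lambda>u. \<Sum>d\<in>UNIV. (\<lambda>u. u d * \<rho> g (\<lambda>j'. if j' = d then 1 else 0) j) u) u)"
      by (intro ext arg_cong[where f="\<lambda>x. t + x"] rho_lin[OF assms(3) g])
    also have "\<dots> \<in> gen_alg {(\<lambda>v. v j) | j. True}"
      by (rule gen_alg.add[OF gen_alg.const L])
    finally show "(\<lambda>u. t + \<rho> g u j) \<in> gen_alg {(\<lambda>v. v j) | j. True}" .
  qed
  moreover have "\<forall>h\<in>carrier G. \<forall>u. f (\<rho> h u) = f u"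
  proof (intro ballI allI)
    fix h u assume h: "h \<in> carrier G"
    have "f (\<rho> h u) = (\<Prod>g\<in>carrier G. (t + \<rho> (g \<otimes>\<^bsub>G\<^esub> h) u j))"
    proof -
      have "\<And>g. g \<in> carrier G \<Longrightarrow> \<rho> (g \<otimes>\<^bsub>G\<^esub> h) u = \<rho> g (\<rho> h u)"
        using h assms(3) unfolding G_module_def by blast
      then show ?thesis unfolding f_def by (intro prod.cong) simp_all
    qed
    also have "\<dots> = f u"
      unfolding f_def using prod.reindex_bij_betw[OF rcos_bij[OF assms(1) h], of "\<lambda>g. t + \<rho> g u j"] by simp
    finally show "f (\<rho> h u) = f u" .
  qed
  ultimately have "f \<in> inv_V G \<rho>" unfolding inv_V_def by blast
  then have eq: "f v = f (\<lambda>_. 0)" using assms(4) by blast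
  have one: "\<one>\<^bsub>G\<^esub> \<in> carrier G" using assms(1) by (simp add: group.is_monoid monoid.one_closed)
  have r1: "\<rho> \<one>\<^bsub>G\<^esub> v = v" using assms(3) unfolding G_module_def by blast
  have "f v = 0" unfolding f_def
  proof (rule prod_zero[OF assms(2)])
    show "\<exists>g\<in>carrier G. t + \<rho> g v j = 0"
      using one r1 t_def by (intro bexI[of _ "\<one>\<^bsub>G\<^esub>"]) simp_all
  qed
  moreover have "f (\<lambda>_. 0) = t ^ card (carrier G)"
    unfolding f_def using rho_zero[OF assms(3)] by simp
  moreover have "t ^ card (carrier G) \<noteq> 0" using vj t_def by simp
  ultimately show False using eq by simp
qed


definition pf :: "nat \<Rightarrow> (('d \<Rightarrow> 'k::field) \<Rightarrow> 'k) \<Rightarrow> ((nat \<Rightarrow> nat) \<Rightarrow> (nat \<Rightarrow> 'd \<Rightarrow> 'k) \<Rightarrow> 'k) \<Rightarrow> (nat \<Rightarrow> nat) set \<Rightarrow> bool" where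
  "pf n f h S \<longleftrightarrow> finite S \<and> (\<forall>e. h e \<in> polys_Vn n) \<and> (\<forall>e. e \<notin> S \<longrightarrow> h e = (\<lambda>_. 0)) \<and>
     (\<forall>e. (\<exists>i\<ge>n. e i \<noteq> 0) \<longrightarrow> h e = (\<lambda>_. 0)) \<and>
     (\<forall>\<alpha> w. f (\<lambda>j. \<Sum>i<n. \<alpha> i * w i j) = (\<Sum>e\<in>S. (\<Prod>i<n. \<alpha> i ^ e i) * h e w))"

lemma pf_pol:
  assumes "pf n f h S"
  shows "pol_family n f h"
proof -
  have fin: "finite S" and sub: "{e. h e \<noteq> (\<lambda>_. 0)} \<subseteq> S" using assms unfolding pf_def by auto
  have "(\<Sum>e\<in>{e. h e \<noteq> (\<lambda>_. 0)}. (\<Prod>i<n. \<alpha> i ^ e i) * h e w) = (\<Sum>e\<in>S. (\<Prod>i<n. \<alpha> i ^ e i) * h e w)"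
    for \<alpha> w
    by (rule sum.mono_neutral_left[OF fin sub]) auto
  note eq = this
  have fs: "finite {e. h e \<noteq> (\<lambda>_. 0)}" using finite_subset[OF sub fin] .
  show ?thesis unfolding pol_family_def
  proof (intro conjI allI impI)
    show "\<And>e. h e \<in> polys_Vn n" using assms unfolding pf_def by blast
    show "finite {e. h e \<noteq> (\<lambda>_. 0)}" by (rule fs)
    show "\<And>e. \<exists>i\<ge>n. e i \<noteq> 0 \<Longrightarrow> h e = (\<lambda>_. 0)" using assms unfolding pf_def by blast
    fix \<alpha> w
    have "f (\<lambda>j. \<Sum>i<n. \<alpha> i * w i j) = (\<Sum>e\<in>S. (\<Prod>i<n. \<alpha> i ^ e i) * h e w)"
      using assms unfolding pf_def by blast
    then show "f (\<lambda>j. \<Sum>i<n. \<alpha> i * w i j) = (\<Sum>e\<in>{e. h e \<noteq> (\<lambda>_. 0)}. (\<Prod>i<n. \<alpha> i ^ e i) * h e w)"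
      using eq by simp
  qed
qed

lemma pf_const:
  "pf n (\<lambda>_. c) (\<lambda>e. if e = (\<lambda>_. 0) then (\<lambda>_. c) else (\<lambda>_. 0)) {\<lambda>_. 0}"
  unfolding pf_def polys_Vn_def by (auto intro: gen_alg.const)

lemma pf_coord:
  "pf n (\<lambda>v::'d \<Rightarrow> 'k::field. v j) (\<lambda>e w. \<Sum>i<n. if e = (\<lambda>i'. if i' = i then 1 else 0) then w i j else 0)
       ((\<lambda>i. \<lambda>i'. if i' = i then 1 else 0) ` {..<n})"
proof -
  define \<delta> where "\<delta> = (\<lambda>i::nat. \<lambda>i'::nat. if i' = i then (1::nat) else 0)"
  have dinj: "\<delta> a = \<delta> b \<longleftrightarrow> a = b" for a b
  proof
    assume "\<delta> a = \<delta> b"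
    then have "\<delta> a a = \<delta> b a" by simp
    then show "a = b" unfolding \<delta>_def by (simp split: if_splits)
  qed simp
  have poly: "(\<lambda>w. \<Sum>i<n. if e = \<delta> i then w i j else 0) \<in> polys_Vn n" for e
    unfolding polys_Vn_def
  proof (rule gen_alg_sum, simp)
    fix i assume "i \<in> {..<n}"
    then show "(\<lambda>w. if e = \<delta> i then w i j else 0) \<in> gen_alg {(\<lambda>w. w i j) | i j. i < n}"
    proof (cases "e = \<delta> i")
      case True
      have "(\<lambda>w. w i j) \<in> gen_alg {(\<lambda>w. w i j) | i j. i < n}"
        by (rule gen_alg.gen) (use \<open>i \<in> {..<n}\<close> in blast)
      then show ?thesis using True by simp
    next
      case False
      then show ?thesis using gen_alg.const[of 0] by simp
    qed
  qed
  have out: "(\<lambda>w. \<Sum>i<n. if e = \<delta> i then w i j else (0::'k)) = (\<lambda>_. 0)" if "e \<notin> \<delta> ` {..<n}" for e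
  proof (intro ext sum.neutral ballI)
    fix w :: "nat \<Rightarrow> 'd \<Rightarrow> 'k" and i assume "i \<in> {..<n}"
    then have "e \<noteq> \<delta> i" using that by blast
    then show "(if e = \<delta> i then w i j else 0) = 0" by simp
  qed
  have big: "(\<lambda>w. \<Sum>i<n. if e = \<delta> i then w i j else (0::'k)) = (\<lambda>_. 0)" if ex: "\<exists>i\<ge>n. e i \<noteq> 0" for e
  proof -
    obtain i' where "i' \<ge> n" "e i' \<noteq> 0" using ex by blast
    then have ne: "e \<noteq> \<delta> i" if "i < n" for i
    proof -
      have "\<delta> i i' = 0" using that \<open>i' \<ge> n\<close> unfolding \<delta>_def by simp
      then show ?thesis using \<open>e i' \<noteq> 0\<close> by metis
    qed
    show ?thesis by (intro ext sum.neutral ballI) (simp add: ne)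
  qed
  have ident: "(\<Sum>i<n. \<alpha> i * w i j) = (\<Sum>e\<in>\<delta> ` {..<n}. (\<Prod>i<n. \<alpha> i ^ e i) * (\<Sum>i<n. if e = \<delta> i then w i j else (0::'k)))"
    for \<alpha> w
  proof -
    have inj: "inj_on \<delta> {..<n}" using dinj by (simp add: inj_on_def)
    have "(\<Sum>e\<in>\<delta> ` {..<n}. (\<Prod>i<n. \<alpha> i ^ e i) * (\<Sum>i<n. if e = \<delta> i then w i j else (0::'k)))
       = (\<Sum>i0<n. (\<Prod>i<n. \<alpha> i ^ \<delta> i0 i) * (\<Sum>i<n. if \<delta> i0 = \<delta> i then w i j else 0))"
      by (simp add: sum.reindex[OF inj])
    also have "\<dots> = (\<Sum>i0<n. \<alpha> i0 * w i0 j)"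
    proof (rule sum.cong[OF refl])
      fix i0 assume i0: "i0 \<in> {..<n}"
      have "(\<Prod>i<n. \<alpha> i ^ \<delta> i0 i) = (\<Prod>i<n. if i = i0 then \<alpha> i0 else 1)"
        unfolding \<delta>_def by (intro prod.cong) auto
      also have "\<dots> = \<alpha> i0" using i0 by (simp add: prod.delta)
      finally have p: "(\<Prod>i<n. \<alpha> i ^ \<delta> i0 i) = \<alpha> i0" .
      have "(\<Sum>i<n. if \<delta> i0 = \<delta> i then w i j else 0) = (\<Sum>i<n. if i0 = i then w i j else 0)"
        using dinj by simp
      also have "\<dots> = w i0 j" using i0 by (simp add: sum.delta)
      finally show "(\<Prod>i<n. \<alpha> i ^ \<delta> i0 i) * (\<Sum>i<n. if \<delta> i0 = \<delta> i then w i j else 0) = \<alpha> i0 * w i0 j"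
        using p by simp
    qed
    finally show ?thesis by simp
  qed
  have de: "(\<lambda>i::nat. \<lambda>i'::nat. if i' = i then (1::nat) else 0) = \<delta>" by (simp add: \<delta>_def)
  have di: "\<And>i. (\<lambda>i'::nat. if i' = i then (1::nat) else 0) = \<delta> i" by (simp add: \<delta>_def)
  show ?thesis
    unfolding pf_def de di
    apply (intro conjI allI impI)
        apply simp
       apply (rule poly)
      apply (erule out)
     apply (erule big)
    apply (rule ident)
    done
qed

lemma pf_add:
  assumes "pf n f1 h1 S1" "pf n f2 h2 S2"
  shows "pf n (\<lambda>x. f1 x + f2 x) (\<lambda>e w. h1 e w + h2 e w) (S1 \<union> S2)"
proof -
  have f1: "finite S1" and f2: "finite S2" using assms unfolding pf_def by auto
  have z1: "\<And>e. e \<notin> S1 \<Longrightarrow> h1 e = (\<lambda>_. 0)" and z2: "\<And>e. e \<notin> S2 \<Longrightarrow> h2 e = (\<lambda>_. 0)"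
    using assms unfolding pf_def by auto
  have e1: "(\<Sum>e\<in>S1. (\<Prod>i<n. \<alpha> i ^ e i) * h1 e w) = (\<Sum>e\<in>S1 \<union> S2. (\<Prod>i<n. \<alpha> i ^ e i) * h1 e w)" for \<alpha> w
    by (rule sum.mono_neutral_left) (use f1 f2 z1 in auto)
  have e2: "(\<Sum>e\<in>S2. (\<Prod>i<n. \<alpha> i ^ e i) * h2 e w) = (\<Sum>e\<in>S1 \<union> S2. (\<Prod>i<n. \<alpha> i ^ e i) * h2 e w)" for \<alpha> w
    by (rule sum.mono_neutral_left) (use f1 f2 z2 in auto)
  have poly: "(\<lambda>w. h1 e w + h2 e w) \<in> polys_Vn n" for e
    using assms unfolding pf_def polys_Vn_def by (auto intro: gen_alg.add)
  have big: "\<forall>e. (\<exists>i\<ge>n. e i \<noteq> 0) \<longrightarrow> (\<lambda>w. h1 e w + h2 e w) = (\<lambda>_. 0)"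
    using assms unfolding pf_def by (metis (no_types, lifting) add_0)
  have out: "\<forall>e. e \<notin> S1 \<union> S2 \<longrightarrow> (\<lambda>w. h1 e w + h2 e w) = (\<lambda>_. 0)"
    using z1 z2 by auto
  have id: "f1 (\<lambda>j. \<Sum>i<n. \<alpha> i * w i j) + f2 (\<lambda>j. \<Sum>i<n. \<alpha> i * w i j) =
      (\<Sum>e\<in>S1 \<union> S2. (\<Prod>i<n. \<alpha> i ^ e i) * (h1 e w + h2 e w))" for \<alpha> w
    using assms unfolding pf_def e1 e2 by (simp add: distrib_left sum.distrib)
  show ?thesis unfolding pf_def
    apply (intro conjI allI impI)
        apply (simp add: f1 f2)
       apply (rule poly)
      apply (rule out[rule_format], assumption)
     apply (rule big[rule_format], assumption)
    apply (rule id)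
    done
qed

lemma pf_mult:
  assumes "pf n f1 h1 S1" "pf n f2 h2 S2"
  shows "pf n (\<lambda>x. f1 x * f2 x)
    (\<lambda>e w. \<Sum>p\<in>{p \<in> S1 \<times> S2. (\<lambda>i. fst p i + snd p i) = e}. h1 (fst p) w * h2 (snd p) w)
    ((\<lambda>p. \<lambda>i. fst p i + snd p i) ` (S1 \<times> S2))"
proof -
  define sp :: "(nat \<Rightarrow> nat) \<times> (nat \<Rightarrow> nat) \<Rightarrow> nat \<Rightarrow> nat" where "sp = (\<lambda>p. \<lambda>i. fst p i + snd p i)"
  have f1: "finite S1" and f2: "finite S2" using assms unfolding pf_def by auto
  have fin: "finite (S1 \<times> S2)" using f1 f2 by simp
  have p1: "\<And>e. h1 e \<in> polys_Vn n" and p2: "\<And>e. h2 e \<in> polys_Vn n" using assms unfolding pf_def by auto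
  have b1: "\<And>e. (\<exists>i\<ge>n. e i \<noteq> 0) \<Longrightarrow> h1 e = (\<lambda>_. 0)" and b2: "\<And>e. (\<exists>i\<ge>n. e i \<noteq> 0) \<Longrightarrow> h2 e = (\<lambda>_. 0)"
    using assms unfolding pf_def by auto
  have poly: "(\<lambda>w. \<Sum>p\<in>{p \<in> S1 \<times> S2. sp p = e}. h1 (fst p) w * h2 (snd p) w) \<in> polys_Vn n" for e
    unfolding polys_Vn_def
    by (rule gen_alg_sum) (use fin p1 p2 in \<open>auto simp: polys_Vn_def intro: gen_alg.mult\<close>)
  have out: "(\<lambda>w. \<Sum>p\<in>{p \<in> S1 \<times> S2. sp p = e}. h1 (fst p) w * h2 (snd p) w) = (\<lambda>_. 0)"
    if "e \<notin> sp ` (S1 \<times> S2)" for e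
  proof -
    have E: "{p \<in> S1 \<times> S2. sp p = e} = {}" using that by auto
    show ?thesis by (intro ext) (simp only: E sum.empty)
  qed
  have big: "(\<lambda>w. \<Sum>p\<in>{p \<in> S1 \<times> S2. sp p = e}. h1 (fst p) w * h2 (snd p) w) = (\<lambda>_. 0)"
    if ex: "\<exists>i\<ge>n. e i \<noteq> 0" for e
  proof -
    obtain i where i: "i \<ge> n" "e i \<noteq> 0" using ex by blast
    have "h1 (fst p) w * h2 (snd p) w = 0" if "p \<in> {p \<in> S1 \<times> S2. sp p = e}" for p w
    proof -
      have "fst p i + snd p i \<noteq> 0" using that i unfolding sp_def by auto
      then have "fst p i \<noteq> 0 \<or> snd p i \<noteq> 0" by simp
      then show ?thesis
      proof
        assume "fst p i \<noteq> 0"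
        then have "h1 (fst p) = (\<lambda>_. 0)" using b1[of "fst p"] i(1) by blast
        then show ?thesis by simp
      next
        assume "snd p i \<noteq> 0"
        then have "h2 (snd p) = (\<lambda>_. 0)" using b2[of "snd p"] i(1) by blast
        then show ?thesis by simp
      qed
    qed
    then show ?thesis by (intro ext sum.neutral) blast
  qed
  have id: "f1 (\<lambda>j. \<Sum>i<n. \<alpha> i * w i j) * f2 (\<lambda>j. \<Sum>i<n. \<alpha> i * w i j) =
      (\<Sum>e\<in>sp ` (S1 \<times> S2). (\<Prod>i<n. \<alpha> i ^ e i) * (\<Sum>p\<in>{p \<in> S1 \<times> S2. sp p = e}. h1 (fst p) w * h2 (snd p) w))"
    for \<alpha> w
  proof -
    define A where "A = (\<lambda>e. \<Prod>i<n. \<alpha> i ^ e i)"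
    have Asp: "A (sp p) = A (fst p) * A (snd p)" for p
      unfolding A_def sp_def by (simp add: power_add prod.distrib)
    have "f1 (\<lambda>j. \<Sum>i<n. \<alpha> i * w i j) * f2 (\<lambda>j. \<Sum>i<n. \<alpha> i * w i j)
        = (\<Sum>e1\<in>S1. A e1 * h1 e1 w) * (\<Sum>e2\<in>S2. A e2 * h2 e2 w)"
      using assms unfolding pf_def A_def by simp
    also have "\<dots> = (\<Sum>e1\<in>S1. \<Sum>e2\<in>S2. (A e1 * h1 e1 w) * (A e2 * h2 e2 w))"
      by (rule sum_product)
    also have "\<dots> = (\<Sum>p\<in>S1 \<times> S2. (A (fst p) * h1 (fst p) w) * (A (snd p) * h2 (snd p) w))"
      by (subst sum.cartesian_product) (simp add: case_prod_beta)
    also have "\<dots> = (\<Sum>p\<in>S1 \<times> S2. A (sp p) * (h1 (fst p) w * h2 (snd p) w))"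
      by (intro sum.cong refl) (simp add: Asp mult_ac)
    also have "\<dots> = (\<Sum>e\<in>sp ` (S1 \<times> S2). \<Sum>p\<in>{p. p \<in> S1 \<times> S2 \<and> sp p = e}. A (sp p) * (h1 (fst p) w * h2 (snd p) w))"
      by (rule sum.image_gen[OF fin])
    also have "\<dots> = (\<Sum>e\<in>sp ` (S1 \<times> S2). A e * (\<Sum>p\<in>{p \<in> S1 \<times> S2. sp p = e}. h1 (fst p) w * h2 (snd p) w))"
      by (intro sum.cong refl) (simp add: sum_distrib_left)
    finally show ?thesis unfolding A_def .
  qed
  have se: "(\<lambda>p. \<lambda>i. fst p i + snd p i) = sp" by (simp add: sp_def)
  have si: "\<And>p. (\<lambda>i. fst p i + snd p i) = sp p" by (simp add: sp_def)
  show ?thesis unfolding pf_def se si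
    apply (intro conjI allI impI)
        apply (simp add: fin)
       apply (rule poly)
      apply (erule out)
     apply (erule big)
    apply (rule id)
    done
qed

lemma pol_exists:
  assumes "f \<in> polys_V"
  shows "\<exists>h S. pf n f h S"
  using assms unfolding polys_V_def
proof (induction f rule: gen_alg.induct)
  case (const c)
  then show ?case using pf_const by blast
next
  case (gen f)
  then obtain j where fj: "f = (\<lambda>v. v j)" by blast
  show ?case unfolding fj by (rule exI, rule exI, rule pf_coord)
next
  case (add f g)
  then show ?case using pf_add by blast
next
  case (mult f g)
  then show ?case using pf_mult by blast
qed


lemma inv_zero_pt:
  fixes \<rho> :: "'g \<Rightarrow> ('d::finite \<Rightarrow> 'k::field) \<Rightarrow> ('d \<Rightarrow> 'k)"
  assumes "group G" "finite (carrier G)" "G_module G \<rho>"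
    and "w \<in> Vsum n"
    and "\<And>i f. i < n \<Longrightarrow> f \<in> inv_V G \<rho> \<Longrightarrow> f (w i) = f (\<lambda>_. 0)"
  shows "w = (\<lambda>_ _. 0)"
proof (rule ext)
  fix i
  show "w i = (\<lambda>_. 0)"
  proof (cases "i < n")
    case False
    then show ?thesis using assms(4) unfolding Vsum_def by simp
  next
    case True
    show ?thesis by (rule core[OF assms(1-3)]) (use assms(5)[OF True] in blast)
  qed
qed

lemma nullcone_zero:
  fixes \<rho> :: "'g \<Rightarrow> ('d::finite \<Rightarrow> 'k::field) \<Rightarrow> ('d \<Rightarrow> 'k)"
  assumes "group G" "finite (carrier G)" "G_module G \<rho>"
    and w: "w \<in> nullcone G \<rho> n"
  shows "w = (\<lambda>_ _. 0)"
proof (rule inv_zero_pt[OF assms(1-3)])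
  show wV: "w \<in> Vsum n" using w unfolding nullcone_def by blast
  fix i f assume i: "i < n" and f: "f \<in> inv_V G \<rho>"
  define F where "F = (\<lambda>w' :: nat \<Rightarrow> 'd \<Rightarrow> 'k. f (w' i))"
  have "F \<in> polys_Vn n"
    unfolding polys_Vn_def F_def
  proof (rule gen_alg_comp[where \<phi> = "\<lambda>w'. w' i"])
    show "f \<in> gen_alg {(\<lambda>v. v j) | j. True}" using f unfolding inv_V_def polys_V_def by blast
    fix c :: "('d \<Rightarrow> 'k) \<Rightarrow> 'k" assume "c \<in> {(\<lambda>v. v j) | j. True}"
    then obtain j where c: "c = (\<lambda>v. v j)" by blast
    have "(\<lambda>x::nat \<Rightarrow> 'd \<Rightarrow> 'k. x i j) \<in> gen_alg {(\<lambda>w. w i j) | i j. i < n}"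
      by (rule gen_alg.gen) (use i in blast)
    then show "(\<lambda>x. c (x i)) \<in> gen_alg {(\<lambda>w. w i j) | i j. i < n}" using c by simp
  qed
  moreover have "\<forall>g\<in>carrier G. \<forall>w'\<in>Vsum n. F (\<lambda>i. \<rho> g (w' i)) = F w'"
    using f unfolding F_def inv_V_def by simp
  ultimately have "F \<in> inv_Vn G \<rho> n" unfolding inv_Vn_def by blast
  then have "F w = F (\<lambda>_ _. 0)" using w unfolding nullcone_def by blast
  then show "f (w i) = f (\<lambda>_. 0)" unfolding F_def by simp
qed

lemma pol_nullcone_zero:
  fixes \<rho> :: "'g \<Rightarrow> ('d::finite \<Rightarrow> 'k::field) \<Rightarrow> ('d \<Rightarrow> 'k)"
  assumes "group G" "finite (carrier G)" "G_module G \<rho>"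
    and w: "w \<in> pol_nullcone G \<rho> n"
  shows "w = (\<lambda>_ _. 0)"
proof (rule inv_zero_pt[OF assms(1-3)])
  show wV: "w \<in> Vsum n" using w unfolding pol_nullcone_def by blast
  fix i f assume i: "i < n" and f: "f \<in> inv_V G \<rho>"
  have "f \<in> polys_V" using f unfolding inv_V_def by blast
  then obtain h S where pfh: "pf n f h S" using pol_exists by blast
  then have pfam: "pol_family n f h" by (rule pf_pol)
  have inpol: "h e \<in> pol_inv G \<rho> n" for e
    unfolding pol_inv_def by (rule gen_alg.gen) (use f pfam in blast)
  have hw: "h e w = h e (\<lambda>_ _. 0)" for e
    using w inpol[of e] unfolding pol_nullcone_def by blast
  define \<alpha> :: "nat \<Rightarrow> 'k" where "\<alpha> = (\<lambda>i'. if i' = i then 1 else 0)"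
  have id: "f (\<lambda>j. \<Sum>i'<n. \<alpha> i' * w' i' j) = (\<Sum>e\<in>S. (\<Prod>i'<n. \<alpha> i' ^ e i') * h e w')" for w'
    using pfh unfolding pf_def by blast
  have s1: "(\<lambda>j. \<Sum>i'<n. \<alpha> i' * w i' j) = w i"
  proof (rule ext)
    fix j
    have "(\<Sum>i'<n. \<alpha> i' * w i' j) = (\<Sum>i'<n. if i' = i then w i j else 0)"
      unfolding \<alpha>_def by (intro sum.cong) auto
    also have "\<dots> = w i j" using i by simp
    finally show "(\<Sum>i'<n. \<alpha> i' * w i' j) = w i j" .
  qed
  have s0: "(\<lambda>j. \<Sum>i'<n. \<alpha> i' * (\<lambda>_ _. 0::'k) i' j) = (\<lambda>_. 0)" by simp
  have "f (w i) = (\<Sum>e\<in>S. (\<Prod>i'<n. \<alpha> i' ^ e i') * h e w)" using id[of w] s1 by simp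
  also have "\<dots> = (\<Sum>e\<in>S. (\<Prod>i'<n. \<alpha> i' ^ e i') * h e (\<lambda>_ _. 0))" using hw by simp
  also have "\<dots> = f (\<lambda>_. 0)" using id[of "\<lambda>_ _. 0"] s0 by simp
  finally show "f (w i) = f (\<lambda>_. 0)" .
qed

lemma Sup_enat_all: "Sup {enat n | n. True} = \<infinity>"
proof (rule ccontr)
  assume "Sup {enat n | n. True} \<noteq> \<infinity>"
  then obtain m where m: "Sup {enat n | n. True} = enat m" by auto
  have "enat (Suc m) \<le> Sup {enat n | n. True}" by (rule Sup_upper) blast
  then show False using m by simp
qed

theorem theorem3p9:
  fixes G :: "('g, 'm) monoid_scheme"
    and \<rho> :: "'g \<Rightarrow> ('d::finite \<Rightarrow> 'k::field_char_0) \<Rightarrow> ('d \<Rightarrow> 'k)"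
  assumes "alg_closed TYPE('k)"
    and "group G" and "finite (carrier G)"
    and "G_module G \<rho>"
  shows "pol_ind G \<rho> = \<infinity>"
proof -
  have eq: "nullcone G \<rho> n = pol_nullcone G \<rho> n" for n
  proof -
    have z: "(\<lambda>_ _. 0) \<in> Vsum n" unfolding Vsum_def by simp
    have "nullcone G \<rho> n = {\<lambda>_ _. 0}"
      using nullcone_zero[OF assms(2-4)] z unfolding nullcone_def by auto
    moreover have "pol_nullcone G \<rho> n = {\<lambda>_ _. 0}"
      using pol_nullcone_zero[OF assms(2-4)] z unfolding pol_nullcone_def by auto
    ultimately show ?thesis by simp
  qed
  show ?thesis unfolding pol_ind_def using eq Sup_enat_all by simp
qed

end
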